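(* For every fixed $a\in(0,1/2]$, \[ \lim_{n\to\infty}\overline{\Lambda}(n;a)=\theta(a):=\begin{cases}\frac{(1-\sqrt a)^{2}}{a}, & 0<a<\frac14,\\[2pt] \frac{1}{2a}-1, & \frac14\le a\le\frac12.\end{cases} \]
   Context: For integers $n\ge1$, $k\in[0:n]$ and real $x$, the Krawtchouk polynomial is $K_k(x)=K_k^{(n)}(x):=\sum_{j=0}^{k}(-1)^{j}\binom{x}{j}\binom{n-x}{k-j}$, with generalized binomial coefficients $\binom{x}{j}=\frac{x(x-1)\cdots(x-j+1)}{j!}$. Here $[m:n]=\{m,m+1,\dots,n\}$. For real $a\in(0,1/2]$, $\overline{\Lambda}(n;a)$ is the optimal value of the linear program: maximize $-\sum_{k=1}^{n}\left[K_k(0)+K_k(1)\left(\frac1a-1\right)\right]x_k$ over $(x_1,\dots,x_n)\in\mathbb{R}^n$ subject to $x_k\ge0$ for $k\in[1:n]$ and $\sum_{k=1}^{n}[K_k(1)-K_k(i)]x_k\ge -1$ for all $i\in[2:n]$. *)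

theory Defs
  imports "HOL-Analysis.Analysis" "HOL-Library.Extended_Real"
begin

definition kraw :: "nat \<Rightarrow> nat \<Rightarrow> real \<Rightarrow> real" where
  "kraw n k x = (\<Sum>j=0..k. (-1)^j * (x gchoose j) * ((real n - x) gchoose (k - j)))"

text \<open>Feasible set of the LP: vectors x : nat => real, only x_1..x_n relevant
  (others fixed to 0 to make the representation canonical).\<close>
definition lp_feasible :: "nat \<Rightarrow> (nat \<Rightarrow> real) set" where
  "lp_feasible n = {x. (\<forall>k. (k = 0 \<or> k > n) \<longrightarrow> x k = 0) \<and>
      (\<forall>k\<in>{1..n}. x k \<ge> 0) \<and>
      (\<forall>i\<in>{2..n}. (\<Sum>k=1..n. (kraw n k 1 - kraw n k (real i)) * x k) \<ge> -1)}"

definition lp_objective :: "nat \<Rightarrow> real \<Rightarrow> (nat \<Rightarrow> real) \<Rightarrow> real" where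
  "lp_objective n a x = - (\<Sum>k=1..n. (kraw n k 0 + kraw n k 1 * (1 / a - 1)) * x k)"

text \<open>Optimal value of the LP (a supremum, taken in the extended reals so that an
  unbounded LP has value +infinity).\<close>
definition LambdaBar :: "nat \<Rightarrow> real \<Rightarrow> ereal" where
  "LambdaBar n a = (SUP x\<in>lp_feasible n. ereal (lp_objective n a x))"

definition theta :: "real \<Rightarrow> real" where
  "theta a = (if a < 1/4 then (1 - sqrt a)^2 / a else 1 / (2*a) - 1)"

end

theory Submission
  imports Defs
begin

lemma kraw_nat:
  assumes "i \<le> n"
  shows "kraw n k (real i) = (\<Sum>j=0..k. (-1)^j * real (i choose j) * real ((n-i) choose (k-j)))"
  unfolding kraw_def
proof (rule sum.cong[OF refl])
  fix j
  have "real n - real i = real (n - i)" using assms by (simp add: of_nat_diff)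
  then show "(-1)^j * (real i gchoose j) * ((real n - real i) gchoose (k - j)) =
     (-1)^j * real (i choose j) * real ((n-i) choose (k-j))"
    by (simp only: binomial_gbinomial)
qed

lemma kraw_0_k: "kraw n 0 x = 1"
  unfolding kraw_def by simp

lemma kraw_GF:
  fixes z :: real
  assumes "i \<le> n"
  shows "(\<Sum>k=0..n. kraw n k (real i) * z^k) = (1 - z)^i * (1 + z)^(n-i)"
proof -
  define g where "g = (\<lambda>j m. ((-1)^j * real (i choose j) * z^j) * (real ((n-i) choose m) * z^m))"
  have "(\<Sum>k=0..n. kraw n k (real i) * z^k) = (\<Sum>k\<le>n. \<Sum>j\<le>k. g j (k - j))"
    unfolding kraw_nat[OF assms] g_def atLeast0AtMost
    by (auto simp: sum_distrib_right intro!: sum.cong simp flip: power_add)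
  also have "\<dots> = (\<Sum>(j,m)\<in>{(j,m). j+m \<le> n}. g j m)"
    by (rule sum.triangle_reindex_eq[symmetric])
  also have "\<dots> = (\<Sum>(j,m)\<in>{..i}\<times>{..n-i}. g j m)"
  proof (rule sum.mono_neutral_cong_right)
    show "finite {(j,m). j+m \<le> (n::nat)}"
      by (rule finite_subset[of _ "{..n}\<times>{..n}"]) auto
    show "{..i}\<times>{..n-i} \<subseteq> {(j,m). j+m \<le> n}" using assms by auto
    show "\<forall>x\<in>{(j,m). j+m \<le> n} - {..i}\<times>{..n-i}. (case x of (j,m) \<Rightarrow> g j m) = 0"
      by (auto simp: g_def)
  qed auto
  also have "\<dots> = (\<Sum>j\<le>i. (-1)^j * real (i choose j) * z^j) * (\<Sum>m\<le>n-i. real ((n-i) choose m) * z^m)"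
    unfolding g_def sum_product sum.cartesian_product by simp
  also have "(\<Sum>j\<le>i. (-1)^j * real (i choose j) * z^j) = (1 - z)^i"
  proof -
    have e: "\<And>j. (-z)^j = (-1)^j * z^j" by (metis mult_minus1 power_mult_distrib)
    show ?thesis using binomial_ring[of "-z" 1 i] unfolding e by (simp add: mult_ac)
  qed
  also have "(\<Sum>m\<le>n-i. real ((n-i) choose m) * z^m) = (1 + z)^(n-i)"
    using binomial_ring[of z 1 "n-i"] by (simp add: mult_ac add.commute)
  finally show ?thesis .
qed

lemma kraw_n_n:
  assumes "i \<le> n"
  shows "kraw n n (real i) = (-1)^i"
proof -
  have "kraw n n (real i) = (\<Sum>j=0..n. if j = i then (-1)^i else 0)"
    unfolding kraw_nat[OF assms]
  proof (rule sum.cong[OF refl])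
    fix j assume j: "j \<in> {0..n}"
    show "(-1)^j * real (i choose j) * real ((n-i) choose (n-j)) = (if j = i then (-1)^i else 0)"
    proof (cases "j < i")
      case True
      then have "n - i < n - j" using assms j by auto
      then show ?thesis using True by simp
    next
      case False
      then show ?thesis by auto
    qed
  qed
  also have "\<dots> = (-1)^i" using assms by simp
  finally show ?thesis .
qed

lemma sum_trunc:
  assumes "i \<le> k" "\<forall>j\<in>{i<..k}. f j = 0"
  shows "sum f {0..k} = sum f {0..(i::nat)}"
  by (rule sum.mono_neutral_right) (use assms in auto)

lemma kraw0: "kraw n k 0 = real (n choose k)"
proof -
  have "kraw n k 0 = kraw n k (real 0)" by simp
  also have "\<dots> = (\<Sum>j=0..0. (-1)^j * real (0 choose j) * real ((n-0) choose (k-j)))"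
    unfolding kraw_nat[OF le0] by (rule sum_trunc) (auto simp: binomial_eq_0)
  finally show ?thesis by simp
qed

lemma kraw1:
  assumes "1 \<le> k" "1 \<le> n"
  shows "kraw n k 1 = real ((n-1) choose k) - real ((n-1) choose (k-1))"
proof -
  have "kraw n k 1 = kraw n k (real 1)" by simp
  also have "\<dots> = (\<Sum>j=0..1. (-1)^j * real (1 choose j) * real ((n-1) choose (k-j)))"
    unfolding kraw_nat[OF assms(2)] by (rule sum_trunc) (use assms in \<open>auto simp: binomial_eq_0\<close>)
  finally show ?thesis by simp
qed

lemma sum_0_2: "sum f {0..(2::nat)} = f 0 + f 1 + f 2"
  by (simp add: numeral_2_eq_2)

lemma kraw2:
  assumes "1 \<le> k" "2 \<le> n"
  shows "kraw n k 2 = real ((n-2) choose k) - 2 * real ((n-2) choose (k-1))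
      + (if 2 \<le> k then real ((n-2) choose (k-2)) else 0)"
proof -
  have "kraw n k 2 = kraw n k (real 2)" by simp
  also have "\<dots> = (\<Sum>j=0..min 2 k. (-1)^j * real (2 choose j) * real ((n-2) choose (k-j)))"
    unfolding kraw_nat[OF assms(2)] by (rule sum_trunc) (use assms in \<open>auto simp: binomial_eq_0\<close>)
  finally have S: "kraw n k 2 = (\<Sum>j=0..min 2 k. (-1)^j * real (2 choose j) * real ((n-2) choose (k-j)))" .
  show ?thesis
  proof (cases "k = 1")
    case True
    then show ?thesis using S by simp
  next
    case False
    then have "min 2 k = 2" using assms by auto
    then have "kraw n k 2 = (\<Sum>j=0..2. (-1)^j * real (2 choose j) * real ((n-2) choose (k-j)))" using S by simp
    then have E: "kraw n k 2 = real ((n-2) choose k) + (- 2 * real ((n-2) choose (k-1))) + real ((n-2) choose (k-2))"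
      unfolding sum_0_2 by simp
    show ?thesis unfolding E using False assms by simp
  qed
qed

lemma kraw_closed:
  assumes k: "1 \<le> k" "k \<le> n" and n: "2 \<le> n"
  shows "real n * kraw n k 1 = (real n - 2 * real k) * real (n choose k)"
    and "real n * (real n - 1) * kraw n k 2 = ((real n - 2 * real k)^2 - real n) * real (n choose k)"
proof -
  define m where "m = n - 2"
  have m: "n = m + 2" using n unfolding m_def by arith
  define C where "C = real (n choose k)"
  define c1 where "c1 = real ((m+1) choose k)"
  define d1 where "d1 = real ((m+1) choose (k-1))"
  define a where "a = real (m choose k)"
  define b where "b = real (m choose (k-1))"
  define g where "g = (if 2 \<le> k then real (m choose (k-2)) else 0)"
  have I1: "(real n - real k) * C = real n * c1"
  proof -
    have "(n - k) * (n choose k) = n * ((n - 1) choose k)" by (rule binomial_absorb_comp)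
    then have "real ((n - k) * (n choose k)) = real (n * ((n - 1) choose k))" by (rule arg_cong)
    then have "real (n - k) * C = real n * real ((n - 1) choose k)" unfolding C_def
      by (simp only: of_nat_mult)
    then show ?thesis using k m by (simp add: c1_def of_nat_diff)
  qed
  have I2: "real k * C = real n * d1"
  proof -
    define k' where "k' = k - 1"
    have k': "k = Suc k'" using k unfolding k'_def by arith
    have "Suc k' * (n choose Suc k') = n * ((n - 1) choose k')" by (rule binomial_absorption)
    then have "real (Suc k' * (n choose Suc k')) = real (n * ((n - 1) choose k'))" by (rule arg_cong)
    then have "real (Suc k') * C = real n * real ((n - 1) choose k')" unfolding C_def k'
      by (simp only: of_nat_mult)
    then show ?thesis using k' m by (simp add: d1_def)
  qed
  have I3: "(real n - 1 - real k) * c1 = (real n - 1) * a"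
  proof (cases "k = n")
    case True
    then show ?thesis using m by (simp add: c1_def a_def binomial_eq_0)
  next
    case False
    have "((m+1) - k) * ((m+1) choose k) = (m+1) * (((m+1) - 1) choose k)" by (rule binomial_absorb_comp)
    then have "real (((m+1) - k) * ((m+1) choose k)) = real ((m+1) * (((m+1) - 1) choose k))" by (rule arg_cong)
    then have "real ((m+1) - k) * c1 = real (m+1) * a" unfolding c1_def a_def
      by (simp only: of_nat_mult add_diff_cancel_right')
    then show ?thesis using False k m by (simp add: of_nat_diff)
  qed
  have I5: "(real n - real k) * d1 = (real n - 1) * b"
  proof -
    have "((m+1) - (k-1)) * ((m+1) choose (k-1)) = (m+1) * (((m+1) - 1) choose (k-1))" by (rule binomial_absorb_comp)
    then have "real (((m+1) - (k-1)) * ((m+1) choose (k-1))) = real ((m+1) * (((m+1) - 1) choose (k-1)))" by (rule arg_cong)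
    then have "real ((m+1) - (k-1)) * d1 = real (m+1) * b" unfolding d1_def b_def
      by (simp only: of_nat_mult add_diff_cancel_right')
    then show ?thesis using k m by (simp add: of_nat_diff)
  qed
  have I6: "(real k - 1) * d1 = (real n - 1) * g"
  proof (cases "2 \<le> k")
    case True
    define k' where "k' = k - 2"
    have k': "k - 1 = Suc k'" using True unfolding k'_def by arith
    have "Suc k' * ((m+1) choose Suc k') = (m+1) * (((m+1) - 1) choose k')" by (rule binomial_absorption)
    then have "real (Suc k' * ((m+1) choose Suc k')) = real ((m+1) * (((m+1) - 1) choose k'))" by (rule arg_cong)
    then have "real (Suc k') * d1 = real (m+1) * real (m choose k')" unfolding d1_def k'
      by (simp only: of_nat_mult add_diff_cancel_right')
    moreover have "k' = k - 2" using k' by auto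
    moreover have "real (Suc k') = real k - 1" using k' True by (simp add: of_nat_diff)
    ultimately show ?thesis using True m by (simp add: g_def)
  next
    case False
    then have "k = 1" using k by auto
    then show ?thesis by (simp add: g_def)
  qed
  have K1: "kraw n k 1 = c1 - d1" using kraw1[of k n] k n m by (simp add: c1_def d1_def)
  have K2: "kraw n k 2 = a - 2 * b + g" using kraw2[of k n] k n m by (simp add: a_def b_def g_def)
  show "real n * kraw n k 1 = (real n - 2 * real k) * real (n choose k)"
    unfolding K1 C_def[symmetric] using I1 I2 by (simp add: algebra_simps)
  have "real n * (real n - 1) * a = (real n - 1 - real k) * (real n - real k) * C"
    using I1 I3 by algebra
  moreover have "real n * (real n - 1) * b = (real n - real k) * real k * C"
    using I2 I5 by algebra
  moreover have "real n * (real n - 1) * g = (real k - 1) * real k * C"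
    using I2 I6 by algebra
  ultimately show "real n * (real n - 1) * kraw n k 2 = ((real n - 2 * real k)^2 - real n) * real (n choose k)"
    unfolding K2 C_def[symmetric] by (simp add: algebra_simps power2_eq_square)
qed

lemma sum_pt:
  assumes "n \<in> S" "finite S"
  shows "(\<Sum>k\<in>S. g k * (if k = n then c else 0)) = g n * (c::real)"
proof -
  have "(\<Sum>k\<in>S. g k * (if k = n then c else 0)) = (\<Sum>k\<in>S. if k = n then g k * c else 0)"
    by (rule sum.cong) auto
  then show ?thesis using assms by simp
qed

lemma weak_dual:
  assumes n: "2 \<le> n" and Y: "0 \<le> Y"
    and D: "\<forall>k\<in>{1..n}. kraw n k 0 + (1/a - 1 - Y) * kraw n k 1 + Y * kraw n k 2 \<ge> 0"
  shows "LambdaBar n a \<le> ereal Y"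
  unfolding LambdaBar_def
proof (rule SUP_least)
  fix x assume x: "x \<in> lp_feasible n"
  then have xpos: "\<forall>k\<in>{1..n}. x k \<ge> 0"
    and cons: "\<forall>i\<in>{2..n}. (\<Sum>k=1..n. (kraw n k 1 - kraw n k (real i)) * x k) \<ge> -1"
    unfolding lp_feasible_def by auto
  have c2: "(\<Sum>k=1..n. (kraw n k 1 - kraw n k 2) * x k) \<ge> -1"
    using cons n by (metis atLeastAtMost_iff order_refl of_nat_numeral)
  have "lp_objective n a x = (\<Sum>k=1..n. - ((kraw n k 0 + kraw n k 1 * (1 / a - 1)) * x k))"
    unfolding lp_objective_def by (simp add: sum_negf)
  also have "\<dots> \<le> (\<Sum>k=1..n. Y * ((kraw n k 2 - kraw n k 1) * x k))"
  proof (rule sum_mono)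
    fix k assume k: "k \<in> {1..n}"
    have "- (kraw n k 0 + kraw n k 1 * (1 / a - 1)) \<le> Y * (kraw n k 2 - kraw n k 1)"
      using D k by (simp add: algebra_simps)
    then have "- (kraw n k 0 + kraw n k 1 * (1 / a - 1)) * x k \<le> Y * (kraw n k 2 - kraw n k 1) * x k"
      using xpos k by (simp add: mult_right_mono)
    then show "- ((kraw n k 0 + kraw n k 1 * (1 / a - 1)) * x k) \<le> Y * ((kraw n k 2 - kraw n k 1) * x k)"
      by (simp add: algebra_simps)
  qed
  also have "\<dots> = Y * (- (\<Sum>k=1..n. (kraw n k 1 - kraw n k 2) * x k))"
    by (simp add: sum_distrib_left sum_negf[symmetric] algebra_simps)
  also have "\<dots> \<le> Y * 1"
    using c2 Y by (intro mult_left_mono) auto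
  finally show "ereal (lp_objective n a x) \<le> ereal Y" by simp
qed

lemma dual_poly:
  assumes n: "2 \<le> n" and k: "1 \<le> k" "k \<le> n"
    and E: "real n * (real n - 1) + B * (real n - 1) * (real n - 2 * real k)
            + Y * ((real n - 2 * real k)^2 - real n) \<ge> 0"
  shows "kraw n k 0 + B * kraw n k 1 + Y * kraw n k 2 \<ge> 0"
proof -
  define C where "C = real (n choose k)"
  define N where "N = real n"
  define K where "K = real k"
  have h1: "N * kraw n k 1 = (N - 2 * K) * C" using kraw_closed(1)[OF k n] by (simp add: N_def K_def C_def)
  have h2: "N * (N - 1) * kraw n k 2 = ((N - 2 * K)^2 - N) * C"
    using kraw_closed(2)[OF k n] by (simp add: N_def K_def C_def)
  have h0: "kraw n k 0 = C" by (simp add: kraw0 C_def)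
  have eq: "N * (N - 1) * (kraw n k 0 + B * kraw n k 1 + Y * kraw n k 2)
      = C * (N * (N - 1) + B * (N - 1) * (N - 2 * K) + Y * ((N - 2 * K)^2 - N))"
  proof -
    have "N * (N - 1) * (kraw n k 0 + B * kraw n k 1 + Y * kraw n k 2)
      = N * (N - 1) * kraw n k 0 + B * (N - 1) * (N * kraw n k 1) + Y * (N * (N - 1) * kraw n k 2)"
      by (simp add: algebra_simps)
    also have "\<dots> = N * (N - 1) * C + B * (N - 1) * ((N - 2 * K) * C) + Y * (((N - 2 * K)^2 - N) * C)"
      by (simp only: h0 h1 h2)
    also have "\<dots> = C * (N * (N - 1) + B * (N - 1) * (N - 2 * K) + Y * ((N - 2 * K)^2 - N))"
      by (simp add: algebra_simps)
    finally show ?thesis .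
  qed
  have "C \<ge> 0" by (simp add: C_def)
  then have "N * (N - 1) * (kraw n k 0 + B * kraw n k 1 + Y * kraw n k 2) \<ge> 0"
    unfolding eq using E by (simp add: N_def K_def)
  moreover have "N * (N - 1) > 0" using n by (simp add: N_def)
  ultimately show ?thesis by (simp add: zero_le_mult_iff)
qed

lemma upper_big:
  assumes a: "1/4 \<le> a" "a \<le> 1/2" and n: "2 \<le> n"
  shows "LambdaBar n a \<le> ereal (1/(2*a) - 1)"
proof (rule weak_dual[OF n])
  define Y where "Y = 1/(2*a) - 1"
  have Y0: "0 \<le> Y" and Y1: "Y \<le> 1" using a by (auto simp: Y_def field_simps)
  show "0 \<le> 1/(2*a) - 1" using Y0 by (simp add: Y_def)
  have B: "1/a - 1 - Y = Y + 1" using a by (simp add: Y_def field_simps)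
  show "\<forall>k\<in>{1..n}. kraw n k 0 + (1/a - 1 - (1/(2*a) - 1)) * kraw n k 1 + (1/(2*a) - 1) * kraw n k 2 \<ge> 0"
  proof
    fix k assume k: "k \<in> {1..n}"
    define N where "N = real n"
    define K where "K = real k"
    have KN: "K \<le> N" "1 \<le> K" using k by (auto simp: N_def K_def)
    have fac: "N * (N - 1) + (Y + 1) * (N - 1) * (N - 2 * K) + Y * ((N - 2 * K)^2 - N)
          = 2 * (N - K) * (Y * (N - 2 * K) + N - 1 - Y)"
      by (simp add: algebra_simps power2_eq_square)
    have "2 * (N - K) * (Y * (N - 2 * K) + N - 1 - Y) \<ge> 0"
    proof (cases "K = N")
      case True then show ?thesis by simp
    next
      case False
      then have "K \<le> N - 1" using k by (auto simp: N_def K_def)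
      then have "N - 2 * K \<ge> 2 - N" by simp
      then have "Y * (N - 2 * K) \<ge> Y * (2 - N)" using Y0 by (rule mult_left_mono)
      moreover have "Y * (2 - N) + N - 1 - Y = (N - 1) * (1 - Y)" by (simp add: algebra_simps)
      moreover have "(N - 1) * (1 - Y) \<ge> 0" using Y1 KN by simp
      ultimately have "Y * (N - 2 * K) + N - 1 - Y \<ge> 0" by linarith
      then show ?thesis using KN by simp
    qed
    then have "kraw n k 0 + (Y + 1) * kraw n k 1 + Y * kraw n k 2 \<ge> 0"
      using dual_poly[of n k "Y + 1" Y] n k fac by (simp add: N_def K_def)
    then show "kraw n k 0 + (1/a - 1 - (1/(2*a) - 1)) * kraw n k 1 + (1/(2*a) - 1) * kraw n k 2 \<ge> 0"
      using B by (simp add: Y_def)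
  qed
qed

lemma feasible_le:
  assumes "x \<in> lp_feasible n"
  shows "ereal (lp_objective n a x) \<le> LambdaBar n a"
  unfolding LambdaBar_def using assms by (rule SUP_upper)

lemma neg1_pow_le: "(-1::real)^i \<le> 1"
  by (cases "even i") auto

lemma lower_all:
  assumes n: "2 \<le> n" and a: "0 < a"
  shows "ereal (1/(2*a) - 1) \<le> LambdaBar n a"
proof -
  define x where "x = (\<lambda>k. if k = n then (1/2::real) else 0)"
  have nin: "n \<in> {1..n}" using n by auto
  have Kn: "\<And>i. i \<le> n \<Longrightarrow> kraw n n (real i) = (-1)^i" by (rule kraw_n_n)
  have Kn0: "kraw n n 0 = 1" using Kn[of 0] by simp
  have Kn1: "kraw n n 1 = -1" using Kn[of 1] n by simp
  have "x \<in> lp_feasible n"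
    unfolding lp_feasible_def
  proof (intro CollectI conjI ballI allI impI)
    fix k assume "k = 0 \<or> n < k" then show "x k = 0" using n by (auto simp: x_def)
  next
    fix k assume "k \<in> {1..n}" then show "0 \<le> x k" by (simp add: x_def)
  next
    fix i assume i: "i \<in> {2..n}"
    have "(\<Sum>k=1..n. (kraw n k 1 - kraw n k (real i)) * x k) = (kraw n n 1 - kraw n n (real i)) * (1/2)"
      unfolding x_def by (rule sum_pt[OF nin]) simp
    also have "\<dots> = (-1 - (-1)^i) / 2" using Kn[of i] i Kn1 by simp
    also have "\<dots> \<ge> -1" using neg1_pow_le[of i] by simp
    finally show "(\<Sum>k=1..n. (kraw n k 1 - kraw n k (real i)) * x k) \<ge> -1" .
  qed
  moreover have "lp_objective n a x = 1/(2*a) - 1"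
  proof -
    have "lp_objective n a x = - ((kraw n n 0 + kraw n n 1 * (1 / a - 1)) * (1/2))"
      unfolding lp_objective_def x_def by (subst sum_pt[OF nin]) simp_all
    also have "\<dots> = 1/(2*a) - 1" using a by (simp add: Kn0 Kn1 field_simps)
    finally show ?thesis .
  qed
  ultimately show ?thesis using feasible_le by metis
qed

lemma lower_small:
  assumes n: "2 \<le> n" and a: "0 < a" "a < 1/4"
  shows "ereal ((1 - sqrt a)^2 / a) \<le> LambdaBar n a"
proof -
  define s where "s = sqrt a"
  have s0: "0 < s" using a by (simp add: s_def)
  have sa: "s^2 = a" using a by (simp add: s_def)
  have "sqrt a < sqrt (1/4)" using a by (simp only: real_sqrt_less_iff)
  moreover have "sqrt (1/4) = (1/2::real)" by (rule real_sqrt_unique) (simp_all add: power2_eq_square)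
  ultimately have s1: "s < 1/2" by (simp add: s_def)
  define r where "r = - s / (1 - s)"
  define z where "z = 1 / (1 - 2 * s)"
  have z0: "z > 0" using s1 by (simp add: z_def)
  have nz1: "1 - s \<noteq> 0" "1 - 2 * s \<noteq> 0" using s1 by auto
  have zm: "1 - z = - 2 * s / (1 - 2 * s)" using nz1 unfolding z_def by (simp add: field_simps)
  have zp: "1 + z = 2 * (1 - s) / (1 - 2 * s)" using nz1 unfolding z_def by (simp add: field_simps)
  have "r * (1 + z) = (- s * (2 * (1 - s))) / ((1 - s) * (1 - 2 * s))"
    unfolding r_def zp times_divide_times_eq by simp
  also have "\<dots> = (- 2 * s) * (1 - s) / ((1 - 2 * s) * (1 - s))"
    by (simp only: mult.commute mult.left_commute mult_minus_left)
  also have "\<dots> = - 2 * s / (1 - 2 * s)"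
    by (rule nonzero_mult_divide_mult_cancel_right[OF nz1(1)])
  finally have zr: "1 - z = r * (1 + z)" unfolding zm by simp
  have r0: "r < 0" and r1: "-1 < r" using s0 s1 by (auto simp: r_def field_simps)
  define P where "P = (1 + z)^n"
  have P0: "P > 0" using z0 by (simp add: P_def)
  define D where "D = 1 / (r^2 - r)"
  have rr: "r^2 - r > 0" using r0 by (simp add: power2_eq_square)
  have D0: "D > 0" using rr by (simp add: D_def)
  define c where "c = D / P"
  have c0: "c > 0" using D0 P0 by (simp add: c_def)
  define x where "x = (\<lambda>k. if k \<in> {1..n} then c * z^k else 0)"
  have F: "(\<Sum>k=1..n. kraw n k (real i) * x k) = D * r^i - c" if i: "i \<le> n" for i
  proof -
    have "(\<Sum>k=1..n. kraw n k (real i) * x k) = c * (\<Sum>k=1..n. kraw n k (real i) * z^k)"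
      unfolding x_def sum_distrib_left by (rule sum.cong) auto
    also have "(\<Sum>k=1..n. kraw n k (real i) * z^k) = (\<Sum>k=0..n. kraw n k (real i) * z^k) - 1"
      by (simp add: sum.atLeast_Suc_atMost[of 0 n] kraw_0_k)
    also have "(\<Sum>k=0..n. kraw n k (real i) * z^k) = (1 - z)^i * (1 + z)^(n-i)" by (rule kraw_GF[OF i])
    also have "\<dots> = r^i * P"
    proof -
      have "(1 - z)^i * (1 + z)^(n-i) = r^i * ((1 + z)^i * (1 + z)^(n-i))"
        unfolding zr by (simp add: power_mult_distrib)
      also have "\<dots> = r^i * P" using i by (simp add: P_def flip: power_add)
      finally show ?thesis .
    qed
    finally show ?thesis using P0 by (simp add: c_def field_simps)
  qed
  have F0: "(\<Sum>k=1..n. kraw n k 0 * x k) = D - c" using F[of 0] by simp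
  have F1: "(\<Sum>k=1..n. kraw n k 1 * x k) = D * r - c" using F[of 1] n by simp
  have "x \<in> lp_feasible n"
    unfolding lp_feasible_def
  proof (intro CollectI conjI ballI allI impI)
    fix k assume "k = 0 \<or> n < k" then show "x k = 0" by (auto simp: x_def)
  next
    fix k assume "k \<in> {1..n}" then show "0 \<le> x k" using c0 z0 by (simp add: x_def)
  next
    fix i assume i: "i \<in> {2..n}"
    have "(\<Sum>k=1..n. (kraw n k 1 - kraw n k (real i)) * x k)
        = (\<Sum>k=1..n. kraw n k 1 * x k) - (\<Sum>k=1..n. kraw n k (real i) * x k)"
      by (simp add: sum_subtractf[symmetric] algebra_simps)
    also have "\<dots> = D * (r - r^i)" using F1 F[of i] i by (simp add: algebra_simps)
    also have "\<dots> \<ge> -1"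
    proof -
      have "r^i \<le> \<bar>r\<bar>^i" by (metis abs_ge_self power_abs)
      also have "\<bar>r\<bar>^i \<le> \<bar>r\<bar>^2" using i r0 r1 by (intro power_decreasing) auto
      also have "\<bar>r\<bar>^2 = r^2" by simp
      finally have "r^i \<le> r^2" .
      then have "D * (r^i - r) \<le> D * (r^2 - r)" using D0 by (intro mult_left_mono) auto
      also have "D * (r^2 - r) = 1" using rr by (simp add: D_def)
      finally show ?thesis by (simp add: algebra_simps)
    qed
    finally show "(\<Sum>k=1..n. (kraw n k 1 - kraw n k (real i)) * x k) \<ge> -1" .
  qed
  moreover have "lp_objective n a x \<ge> (1 - sqrt a)^2 / a"
  proof -
    have "lp_objective n a x = - ((\<Sum>k=1..n. kraw n k 0 * x k) + (1/a - 1) * (\<Sum>k=1..n. kraw n k 1 * x k))"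
      unfolding lp_objective_def sum_distrib_left sum.distrib[symmetric] by (intro arg_cong[where f=uminus] sum.cong) (simp_all add: algebra_simps)
    also have "\<dots> = - D * (1 + (1/a - 1) * r) + c * (1/a)"
      unfolding F0 F1 by (simp add: algebra_simps)
    also have "\<dots> \<ge> - D * (1 + (1/a - 1) * r)" using c0 a by simp
    also have "- D * (1 + (1/a - 1) * r) = (1 - sqrt a)^2 / a"
    proof -
      have e1: "1 + (1/a - 1) * r = - 1 / s"
        using s0 s1 unfolding r_def sa[symmetric] by (simp add: field_simps power2_eq_square)
      have q: "(1 - s)^2 \<noteq> 0" using nz1 by simp
      have "r^2 - r = s^2 / (1 - s)^2 + s / (1 - s)" by (simp add: r_def power_divide)
      also have "\<dots> = (s^2 + s * (1 - s)) / (1 - s)^2"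
        using nz1 q by (simp add: add_divide_distrib power2_eq_square)
      also have "s^2 + s * (1 - s) = s" by (simp add: algebra_simps power2_eq_square)
      finally have e2: "r^2 - r = s / (1 - s)^2" .
      have "- D * (1 + (1/a - 1) * r) = - (1 / (s / (1 - s)^2)) * (- 1 / s)"
        unfolding D_def e1 e2 by simp
      also have "\<dots> = (1 - s)^2 / s^2" using s0 by (simp add: field_simps power2_eq_square)
      also have "\<dots> = (1 - sqrt a)^2 / a" using sa by (simp add: s_def)
      finally show ?thesis .
    qed
    finally show ?thesis .
  qed
  ultimately show ?thesis using feasible_le order_trans ereal_less_eq(3) by metis
qed

lemma upper_small:
  assumes a: "0 < a" "a < 1/4" and e: "0 < \<epsilon>" "\<epsilon> \<le> 1"
  shows "\<exists>N0. \<forall>n\<ge>N0. LambdaBar n a \<le> ereal ((1 - sqrt a)^2 / a + \<epsilon>)"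
proof -
  define s where "s = sqrt a"
  have s0: "0 < s" using a by (simp add: s_def)
  have sa: "s^2 = a" using a by (simp add: s_def)
  have "sqrt a < sqrt (1/4)" using a by (simp only: real_sqrt_less_iff)
  moreover have "sqrt (1/4) = (1/2::real)" by (rule real_sqrt_unique) (simp_all add: power2_eq_square)
  ultimately have s1: "s < 1/2" by (simp add: s_def)
  define t where "t = 1 / s"
  have t2: "t > 2" using s0 s1 by (simp add: t_def field_simps)
  have ta: "1 / a = t^2" unfolding t_def sa[symmetric] by (simp add: power_divide)
  have th: "(1 - sqrt a)^2 / a = (t - 1)^2"
  proof -
    have "(t - 1)^2 = ((1 - s) / s)^2" using s0 by (simp add: t_def field_simps)
    also have "\<dots> = (1 - s)^2 / a" unfolding sa[symmetric] by (simp add: power_divide)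
    finally show ?thesis by (simp add: s_def)
  qed
  define Y where "Y = (t - 1)^2 + \<epsilon>"
  have Y0: "Y > 0" using e by (simp add: Y_def add_nonneg_pos)
  define B where "B = 1/a - 1 - Y"
  have Bt: "B = 2 * t - 2 - \<epsilon>" unfolding B_def ta Y_def by (simp add: algebra_simps power2_eq_square)
  define \<delta> where "\<delta> = 4 * \<epsilon> * t - \<epsilon>^2"
  have d0: "\<delta> > 0"
  proof -
    have "\<delta> = \<epsilon> * (4 * t - \<epsilon>)" by (simp add: \<delta>_def algebra_simps power2_eq_square)
    moreover have "4 * t - \<epsilon> > 0" using t2 e by simp
    ultimately show ?thesis using e by simp
  qed
  have B2: "B^2 = 4 * Y - \<delta>" unfolding Bt Y_def \<delta>_def by (simp add: algebra_simps power2_eq_square)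
  define N0 where "N0 = nat \<lceil>Y + 4 * Y^2 / \<delta>\<rceil> + 2"
  have "\<forall>n\<ge>N0. LambdaBar n a \<le> ereal ((1 - sqrt a)^2 / a + \<epsilon>)"
  proof (intro allI impI)
    fix n assume nN: "N0 \<le> n"
    then have n: "2 \<le> n" by (simp add: N0_def)
    define N where "N = real n"
    define M where "M = N - 1"
    have "Y + 4 * Y^2 / \<delta> \<le> real (nat \<lceil>Y + 4 * Y^2 / \<delta>\<rceil>)" by (rule real_nat_ceiling_ge)
    then have "real N0 \<ge> Y + 4 * Y^2 / \<delta> + 2" unfolding N0_def by simp
    then have M1: "M \<ge> Y + 4 * Y^2 / \<delta>" using nN by (simp add: M_def N_def)
    have d1: "4 * Y^2 / \<delta> \<ge> 0" using d0 by simp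
    have MY: "M \<ge> Y" using M1 d1 by linarith
    have "M \<ge> 4 * Y^2 / \<delta>" using M1 Y0 by linarith
    then have dM: "\<delta> * M \<ge> 4 * Y^2" using d0 by (simp add: field_simps)
    have "LambdaBar n a \<le> ereal Y"
    proof (rule weak_dual[OF n])
      show "0 \<le> Y" using Y0 by simp
      show "\<forall>k\<in>{1..n}. kraw n k 0 + (1/a - 1 - Y) * kraw n k 1 + Y * kraw n k 2 \<ge> 0"
      proof
        fix k assume k: "k \<in> {1..n}"
        define v where "v = N - 2 * real k"
        define E where "E = N * (N - 1) + B * (N - 1) * v + Y * (v^2 - N)"
        have id1: "4 * Y * E = (2 * Y * v + B * M)^2 + (4 * Y * N * M - 4 * Y^2 * N - B^2 * M^2)"
          unfolding E_def M_def by (simp add: algebra_simps power2_eq_square)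
        have id2: "4 * Y * N * M - 4 * Y^2 * N - B^2 * M^2 = M * (\<delta> * M - 4 * Y^2) + 4 * Y * (M - Y)"
          unfolding B2 M_def by (simp add: algebra_simps power2_eq_square)
        have "M \<ge> 0" using MY Y0 by simp
        then have "M * (\<delta> * M - 4 * Y^2) \<ge> 0" using dM by simp
        moreover have "4 * Y * (M - Y) \<ge> 0" using MY Y0 by simp
        ultimately have "4 * Y * E \<ge> 0" unfolding id1 id2 by simp
        then have E0: "E \<ge> 0" using Y0 by (simp add: zero_le_mult_iff)
        have "kraw n k 0 + B * kraw n k 1 + Y * kraw n k 2 \<ge> 0"
          using dual_poly[of n k B Y] n k E0 by (simp add: E_def v_def N_def)
        then show "kraw n k 0 + (1/a - 1 - Y) * kraw n k 1 + Y * kraw n k 2 \<ge> 0"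
          by (simp add: B_def)
      qed
    qed
    also have "Y = (1 - sqrt a)^2 / a + \<epsilon>" using th by (simp add: Y_def)
    finally show "LambdaBar n a \<le> ereal ((1 - sqrt a)^2 / a + \<epsilon>)" .
  qed
  then show ?thesis by blast
qed

theorem theorem2:
  fixes a :: real
  assumes "0 < a" and "a \<le> 1/2"
  shows "(\<lambda>n. LambdaBar n a) \<longlonglongrightarrow> ereal (theta a)"
proof (rule order_tendstoI)
  have L: "ereal (theta a) \<le> LambdaBar n a" if "2 \<le> n" for n
  proof (cases "a < 1/4")
    case True then show ?thesis using lower_small[OF that assms(1) True] by (simp add: theta_def)
  next
    case False then show ?thesis using lower_all[OF that assms(1)] by (simp add: theta_def)
  qed
  fix y assume y: "y < ereal (theta a)"
  show "eventually (\<lambda>n. y < LambdaBar n a) sequentially"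
    unfolding eventually_sequentially using L y by (meson less_le_trans)
next
  fix y assume y: "ereal (theta a) < y"
  obtain r where r1: "ereal (theta a) < ereal r" and r2: "ereal r < y" using ereal_dense2[OF y] by blast
  have tr: "theta a < r" using r1 by simp
  show "eventually (\<lambda>n. LambdaBar n a < y) sequentially"
  proof (cases "a < 1/4")
    case False
    have "LambdaBar n a < y" if "2 \<le> n" for n
    proof -
      have "LambdaBar n a \<le> ereal (theta a)"
        using upper_big[of a n] False assms that by (simp add: theta_def)
      also have "\<dots> < y" using y .
      finally show ?thesis .
    qed
    then show ?thesis unfolding eventually_sequentially by blast
  next
    case True
    define \<epsilon> where "\<epsilon> = min 1 ((r - theta a) / 2)"
    have e: "0 < \<epsilon>" "\<epsilon> \<le> 1" using tr by (auto simp: \<epsilon>_def)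
    obtain N0 where N0: "\<forall>n\<ge>N0. LambdaBar n a \<le> ereal ((1 - sqrt a)^2 / a + \<epsilon>)"
      using upper_small[OF assms(1) True e] by blast
    have "LambdaBar n a < y" if "N0 \<le> n" for n
    proof -
      have "LambdaBar n a \<le> ereal (theta a + \<epsilon>)" using N0 that True by (simp add: theta_def)
      also have "\<dots> < ereal r"
      proof -
        have "\<epsilon> \<le> (r - theta a) / 2" unfolding \<epsilon>_def by (rule min.cobounded2)
        then show ?thesis using tr by simp
      qed
      also have "\<dots> < y" by (rule r2)
      finally show ?thesis .
    qed
    then show ?thesis unfolding eventually_sequentially by blast
  qed
qed

end
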